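(* Assume (A1) with $p\in(1,2]$, and that $\mathscr V^*=\mathscr V^*_1\cup\mathscr V^*_2$ with $\mathscr V^*_1,\mathscr V^*_2$ disjoint, compact, convex, with smooth boundaries. Let $\vartheta\ge\ell\operatorname{diam}(\mathscr V^* )^p-\underline f$. Then for every $v\in\mathbb R^d$: $$A(w,v)-A(V^*_1(v),v)\ge\|w-V^*_1(v)\|_2^2-2\Big(\frac{2^p\varkappa}{\ell^2}\Big)^{\frac1{p-1}}\quad\text{for all }w\in\mathcal Z_1,$$ $$A(w,v)-A(V^*_2(v),v)\ge\|w-V^*_2(v)\|_2^2-2\Big(\frac{2^p\varkappa}{\ell^2}\Big)^{\frac1{p-1}}\quad\text{for all }w\in\mathcal Z_2.$$
   Context: $f:\mathbb R^d\to\mathbb R$ continuous, $\underline f:=\inf f>-\infty$, $\mathscr V^*$ the set of global minimizers, $\operatorname{dist}(w,\mathscr V^* )$ Euclidean distance, $\operatorname{diam}(\mathscr V^* )=\sup_{v,w\in\mathscr V^*}\|v-w\|_2$. (A1): there are $\ell>0$, $p\in[1,2]$ with $f(w)-\underline f\ge\ell\operatorname{dist}(w,\mathscr V^* )^p$ for all $w$. $A(w,v):=\frac1\varkappa f(w)(f(v)+\vartheta)+\|v-w\|_2^2$ with $\varkappa>0$. $V^*_i(v):=\arg\min_{w\in\mathscr V^*_i}\|v-w\|_2$, $\mathcal Z_1:=\{v:\operatorname{dist}(v,\mathscr V^*_1)<\operatorname{dist}(v,\mathscr V^*_2)\}$, $\mathcal Z_2:=\{v:\operatorname{dist}(v,\mathscr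 V^*_2)<\operatorname{dist}(v,\mathscr V^*_1)\}$. *)

theory Defs
  imports "HOL-Analysis.Analysis"
begin

fun Ck_on :: "nat \<Rightarrow> 'a::real_normed_vector set \<Rightarrow> ('a \<Rightarrow> real) \<Rightarrow> bool" where
  "Ck_on 0 U g = continuous_on U g"
| "Ck_on (Suc k) U g =
     (\<exists>g'. (\<forall>x\<in>U. (g has_derivative g' x) (at x)) \<and> (\<forall>v. Ck_on k U (\<lambda>x. g' x v)))"

definition smooth_on :: "'a::real_normed_vector set \<Rightarrow> ('a \<Rightarrow> real) \<Rightarrow> bool" where
  "smooth_on U g \<longleftrightarrow> (\<forall>k. Ck_on k U g)"

definition smooth_boundary :: "'a::real_normed_vector set \<Rightarrow> bool" where
  "smooth_boundary S \<longleftrightarrow>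
     (\<forall>x\<in>frontier S. \<exists>U g. open U \<and> x \<in> U \<and> smooth_on U g \<and>
        (\<forall>y\<in>U. \<exists>D. (g has_derivative D) (at y) \<and> D \<noteq> (\<lambda>_. 0)) \<and>
        S \<inter> U = {y\<in>U. g y \<le> 0})"

definition minimizers :: "('a \<Rightarrow> real) \<Rightarrow> 'a set" where
  "minimizers f = {w. f w = Inf (range f)}"

definition Afun :: "real \<Rightarrow> real \<Rightarrow> ('a::real_normed_vector \<Rightarrow> real) \<Rightarrow> 'a \<Rightarrow> 'a \<Rightarrow> real" where
  "Afun \<kappa> \<theta> f w v = (1 / \<kappa>) * f w * (f v + \<theta>) + (norm (v - w))\<^sup>2"

end

theory Submission
  imports Defs
begin


lemma powr_sum_le:
  fixes a b p :: real
  assumes "a \<ge> 0" "b \<ge> 0" "p \<ge> 1"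
  shows "(a + b) powr p \<le> 2 powr (p - 1) * (a powr p + b powr p)"
proof (cases "a = 0 \<or> b = 0")
  case True
  have "1 \<le> (2::real) powr (p - 1)" using assms by (intro ge_one_powr_ge_zero) auto
  moreover have "0 \<le> a powr p" "0 \<le> b powr p" by auto
  ultimately show ?thesis using True assms
    by (auto simp: mult_le_cancel_right1 intro: order_trans[OF _ mult_right_mono])
next
  case False
  then have ab: "a > 0" "b > 0" using assms by auto
  have "((1 - 1/2) *\<^sub>R a + (1/2) *\<^sub>R b) powr p \<le> (1 - 1/2) * a powr p + (1/2) * b powr p"
    using convex_onD[OF powr_convex[OF assms(3)], of "1/2" a b] ab by auto
  then have h: "((a + b)/2) powr p \<le> (a powr p + b powr p)/2" by (simp add: field_simps)
  have "a + b = 2 * ((a + b)/2)" by simp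
  then have "(a + b) powr p = (2 * ((a + b)/2)) powr p" by (rule arg_cong)
  also have "\<dots> = 2 powr p * ((a + b)/2) powr p"
    by (rule powr_mult)
  also have "\<dots> \<le> 2 powr p * ((a powr p + b powr p)/2)"
    using h by (intro mult_left_mono) auto
  also have "\<dots> = 2 powr (p - 1) * (a powr p + b powr p)"
    by (simp add: powr_diff)
  finally show ?thesis .
qed

lemma key_bound:
  fixes K x p :: real
  assumes "K > 0" "p > 1" "x \<ge> 0"
  shows "x - K * x powr p \<le> (1 / K) powr (1 / (p - 1))"
proof (cases "x \<le> (1 / K) powr (1 / (p - 1))")
  case True
  have "0 \<le> K * x powr p" using assms by auto
  then show ?thesis using True by linarith
next
  case False
  let ?C = "(1 / K) powr (1 / (p - 1))"
  have Cpos: "?C > 0" using assms by auto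
  have "?C powr (p - 1) \<le> x powr (p - 1)"
    using False Cpos assms by (intro powr_mono2) auto
  moreover have "?C powr (p - 1) = 1 / K"
    using assms by (simp add: powr_powr)
  ultimately have "1 \<le> K * x powr (p - 1)" using assms by (simp add: field_simps)
  moreover have "x powr p = x powr (p - 1) * x"
  proof -
    have "x > 0" using False Cpos by linarith
    then have "x powr ((p - 1) + 1) = x powr (p - 1) * x powr 1" by (simp only: powr_add)
    then show ?thesis using \<open>x > 0\<close> by simp
  qed
  ultimately have "x \<le> K * x powr p"
  proof -
    assume a: "1 \<le> K * x powr (p - 1)" "x powr p = x powr (p - 1) * x"
    have "x > 0" using False Cpos by linarith
    have "1 * x \<le> (K * x powr (p - 1)) * x" using a(1) \<open>x > 0\<close> by (intro mult_right_mono) auto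
    then show ?thesis using a(2) by (simp add: mult.assoc)
  qed
  then show ?thesis using Cpos by linarith
qed
lemma norm_sq_expand:
  fixes v u w :: "'a::real_inner"
  shows "(norm (v - w))\<^sup>2 = (norm (v - u))\<^sup>2 + 2 * inner (v - u) (u - w) + (norm (w - u))\<^sup>2"
proof -
  define y where "y = v - u"
  define z where "z = u - w"
  have "v - w = y + z" unfolding y_def z_def by simp
  then have "(norm (v - w))\<^sup>2 = inner (y + z) (y + z)"
    by (simp add: power2_norm_eq_inner)
  also have "\<dots> = inner y y + 2 * inner y z + inner z z"
    by (simp add: inner_add_left inner_add_right inner_commute)
  also have "\<dots> = (norm (v - u))\<^sup>2 + 2 * inner (v - u) (u - w) + (norm (u - w))\<^sup>2"
    unfolding y_def z_def by (simp add: power2_norm_eq_inner)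
  also have "norm (u - w) = norm (w - u)" by (rule norm_minus_commute)
  finally show ?thesis .
qed

lemma side:
  fixes f :: "'a::euclidean_space \<Rightarrow> real"
    and V1 V2 :: "'a set"
    and ell p \<kappa> \<theta> :: real
  assumes l_pos: "ell > 0"
    and p1: "1 < p"
    and A1: "\<And>w. f w - Inf (range f) \<ge> ell * (infdist w (minimizers f)) powr p"
    and split: "minimizers f = V1 \<union> V2"
    and ne: "V1 \<noteq> {}" "V2 \<noteq> {}"
    and cpt: "compact V1" "compact V2"
    and cvx: "convex V1"
    and kappa_pos: "\<kappa> > 0"
    and theta: "\<theta> \<ge> ell * (diameter (minimizers f)) powr p - Inf (range f)"
    and wZ: "infdist w V1 < infdist w V2"
  shows "Afun \<kappa> \<theta> f w v - Afun \<kappa> \<theta> f (closest_point V1 v) v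
                \<ge> (norm (w - closest_point V1 v))\<^sup>2
                   - 2 * ((2 powr p * \<kappa> / ell\<^sup>2) powr (1 / (p - 1)))"
proof -
  define m where "m = Inf (range f)"
  define S where "S = minimizers f"
  define u where "u = closest_point V1 v"
  define q where "q = closest_point V1 w"
  have cl1: "closed V1" using cpt by (simp add: compact_imp_closed)
  have cptS: "compact S" using cpt split S_def by auto
  have clS: "closed S" "bounded S" using cptS by (auto simp: compact_imp_closed compact_imp_bounded)
  have neS: "S \<noteq> {}" using ne split S_def by auto
  have uV: "u \<in> V1" unfolding u_def using cl1 ne(1) by (rule closest_point_in_set)
  have qV: "q \<in> V1" unfolding q_def using cl1 ne(1) by (rule closest_point_in_set)
  have fu: "f u = m" using uV split unfolding minimizers_def m_def by auto
  define D where "D = norm (v - u)"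
  define d where "d = norm (w - q)"
  have D0: "D \<ge> 0" "d \<ge> 0" unfolding D_def d_def by auto
  have infS: "infdist w S = infdist w V1"
    using wZ ne split S_def by (simp add: infdist_Un_min)
  obtain z1 where z1: "z1 \<in> V1" "infdist w V1 = dist w z1"
    using infdist_attains_inf[OF cl1 ne(1)] by blast
  have "dist w q \<le> dist w z1" unfolding q_def using cl1 z1(1) by (rule closest_point_le)
  moreover have "infdist w V1 \<le> dist w q" using qV by (rule infdist_le)
  ultimately have dd: "d = infdist w S" using z1 infS unfolding d_def by (simp add: dist_norm)
  obtain z where z: "z \<in> S" "infdist v S = dist v z"
    using infdist_attains_inf[OF clS(1) neS] by blast
  define a where "a = infdist v S"
  define b where "b = diameter S"
  have a0: "a \<ge> 0" unfolding a_def by (rule infdist_nonneg)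
  have b0: "b \<ge> 0" unfolding b_def using diameter_bounded_bound[OF clS(2) z(1) z(1)] by simp
  have "D \<le> a + b"
  proof -
    have "D = dist v u" unfolding D_def by (simp add: dist_norm)
    have "dist v u \<le> dist v z1" unfolding u_def using cl1 z1(1) by (rule closest_point_le)
    also have "\<dots> \<le> dist v z + dist z z1" by (rule dist_triangle)
    also have "dist z z1 \<le> b" unfolding b_def
      using diameter_bounded_bound[OF clS(2) z(1)] z1(1) split S_def by auto
    finally show ?thesis using z unfolding a_def D_def by (simp add: dist_norm)
  qed
  have fv: "f v + \<theta> \<ge> ell * (2 / 2 powr p) * D powr p"
  proof -
    have "f v - m \<ge> ell * a powr p" using A1[of v] unfolding a_def S_def m_def .
    moreover have "\<theta> \<ge> ell * b powr p - m" using theta unfolding b_def S_def m_def .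
    ultimately have 1: "f v + \<theta> \<ge> ell * (a powr p + b powr p)" by (simp add: algebra_simps)
    have "D powr p \<le> (a + b) powr p" using \<open>D \<le> a + b\<close> D0 p1 by (intro powr_mono2) auto
    also have "\<dots> \<le> 2 powr (p - 1) * (a powr p + b powr p)"
      using a0 b0 p1 by (intro powr_sum_le) auto
    finally have "(2 / 2 powr p) * D powr p \<le> a powr p + b powr p"
      by (simp add: powr_diff field_simps)
    then have "ell * ((2 / 2 powr p) * D powr p) \<le> ell * (a powr p + b powr p)"
      using l_pos by (intro mult_left_mono) auto
    then show ?thesis using 1 by (simp add: mult.assoc)
  qed
  have fw: "f w - m \<ge> ell * d powr p" using A1[of w] unfolding dd S_def m_def .
  have ip: "inner (v - u) (u - w) \<ge> - (D * d)"
  proof -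
    have "inner (v - u) (q - u) \<le> 0" unfolding u_def using cvx cl1 qV by (rule closest_point_dot)
    moreover have "\<bar>inner (v - u) (q - w)\<bar> \<le> D * d"
      unfolding D_def d_def using Cauchy_Schwarz_ineq2[of "v - u" "q - w"] by (simp add: norm_minus_commute)
    moreover have "inner (v - u) (u - w) = - inner (v - u) (q - u) + inner (v - u) (q - w)"
      by (simp add: inner_diff_right)
    ultimately show ?thesis by linarith
  qed
  define K where "K = ell\<^sup>2 / (2 powr p * \<kappa>)"
  have Kpos: "K > 0" unfolding K_def using l_pos kappa_pos by auto
  define x where "x = d * D"
  have x0: "x \<ge> 0" unfolding x_def using D0 by auto
  have prod: "(1 / \<kappa>) * (f w - m) * (f v + \<theta>) \<ge> 2 * K * x powr p"
  proof -
    have "(ell * d powr p) * (ell * (2 / 2 powr p) * D powr p) \<le> (f w - m) * (f v + \<theta>)"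
    proof (rule mult_mono')
      show "0 \<le> ell * d powr p" using l_pos by auto
      show "0 \<le> ell * (2 / 2 powr p) * D powr p" using l_pos by auto
    qed (use fw fv in auto)
    moreover have "(ell * d powr p) * (ell * (2 / 2 powr p) * D powr p) = \<kappa> * (2 * K * x powr p)"
      unfolding K_def x_def using kappa_pos by (simp add: powr_mult field_simps power2_eq_square)
    ultimately have e: "\<kappa> * (2 * K * x powr p) \<le> (f w - m) * (f v + \<theta>)" by simp
    then have "2 * K * x powr p \<le> (f w - m) * (f v + \<theta>) / \<kappa>"
      using kappa_pos by (simp add: pos_le_divide_eq mult.commute)
    then show ?thesis by simp
  qed
  have kb: "x - K * x powr p \<le> (1 / K) powr (1 / (p - 1))" using Kpos p1 x0 by (rule key_bound)
  have invK: "1 / K = 2 powr p * \<kappa> / ell\<^sup>2" unfolding K_def by simp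
  have eqA: "Afun \<kappa> \<theta> f w v - Afun \<kappa> \<theta> f u v
      = (1 / \<kappa>) * (f w - m) * (f v + \<theta>) + 2 * inner (v - u) (u - w) + (norm (w - u))\<^sup>2"
    unfolding Afun_def fu using norm_sq_expand[of v w u] by (simp add: algebra_simps)
  show ?thesis
    using eqA prod ip kb invK unfolding u_def[symmetric] x_def by (simp add: mult.commute)
qed


theorem mainTheorem11:
  fixes f :: "'a::euclidean_space \<Rightarrow> real"
    and V1 V2 :: "'a set"
    and ell p \<kappa> \<theta> :: real
  assumes cont: "continuous_on UNIV f"
    and bdd: "bdd_below (range f)"
    and l_pos: "ell > 0"
    and p_range: "1 < p" "p \<le> 2"
    and A1: "\<And>w. f w - Inf (range f) \<ge> ell * (infdist w (minimizers f)) powr p"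
    and split: "minimizers f = V1 \<union> V2"
    and disj: "V1 \<inter> V2 = {}"
    and ne: "V1 \<noteq> {}" "V2 \<noteq> {}"
    and cpt: "compact V1" "compact V2"
    and cvx: "convex V1" "convex V2"
    and smooth: "smooth_boundary V1" "smooth_boundary V2"
    and kappa_pos: "\<kappa> > 0"
    and theta: "\<theta> \<ge> ell * (diameter (minimizers f)) powr p - Inf (range f)"
  shows "\<forall>v. (\<forall>w. infdist w V1 < infdist w V2 \<longrightarrow>
              Afun \<kappa> \<theta> f w v - Afun \<kappa> \<theta> f (closest_point V1 v) v
                \<ge> (norm (w - closest_point V1 v))\<^sup>2
                   - 2 * ((2 powr p * \<kappa> / ell\<^sup>2) powr (1 / (p - 1))))
          \<and> (\<forall>w. infdist w V2 < infdist w V1 \<longrightarrow>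
              Afun \<kappa> \<theta> f w v - Afun \<kappa> \<theta> f (closest_point V2 v) v
                \<ge> (norm (w - closest_point V2 v))\<^sup>2
                   - 2 * ((2 powr p * \<kappa> / ell\<^sup>2) powr (1 / (p - 1))))"
  proof (intro allI conjI impI)
  fix v w
  assume "infdist w V1 < infdist w V2"
  then show "Afun \<kappa> \<theta> f w v - Afun \<kappa> \<theta> f (closest_point V1 v) v
                \<ge> (norm (w - closest_point V1 v))\<^sup>2
                   - 2 * ((2 powr p * \<kappa> / ell\<^sup>2) powr (1 / (p - 1)))"
    using side[OF l_pos p_range(1) A1 split ne cpt cvx(1) kappa_pos theta] by blast
next
  fix v w
  assume "infdist w V2 < infdist w V1"
  moreover have "minimizers f = V2 \<union> V1" using split by auto
  ultimately show "Afun \<kappa> \<theta> f w v - Afun \<kappa> \<theta> f (closest_point V2 v) v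
                \<ge> (norm (w - closest_point V2 v))\<^sup>2
                   - 2 * ((2 powr p * \<kappa> / ell\<^sup>2) powr (1 / (p - 1)))"
    using side[OF l_pos p_range(1) A1 _ ne(2) ne(1) cpt(2) cpt(1) cvx(2) kappa_pos theta] by blast
qed

end
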